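(* Let $G$ be a group, $N$ a normal subgroup, $k,l\in\mathbb{Z}_{\ge0}$ and $x_1,\dots,x_k,\check x_1,\dots,\check x_l\in N$ with $x_1+\cdots+x_k-\check x_1-\cdots-\check x_l\in\mathrm{B}'_1(G,N;\mathbb{Z})$. Then \[\|x_1+\cdots+x_k-\check x_1-\cdots-\check x_l\|'\le 4\,\mathrm{cl}_{G,N}(x_1+\cdots+x_k+\check x_1^{-1}+\cdots+\check x_l^{-1})-1+3(k+l).\]
   Context: $\mathrm{C}_1(G;A)$, $\mathrm{C}_2(G;A)$ are the free $A$-modules on $G$ and $G\times G$, $\partial(g_1,g_2)=g_2-g_1g_2+g_1$; $\mathrm{C}'_2(G,N;A)$ is generated by pairs with $g_1\in N$ or $g_2\in N$; $\mathrm{B}'_1(G,N;A)=\partial\mathrm{C}'_2(G,N;A)$. For $c\in\mathrm{B}'_1(G,N;\mathbb{R})$, $\|c\|'=\inf\{\|c'\|_1:c'\in\mathrm{C}'_2(G,N;\mathbb{R}),\partial c'=c\}$ with $\|\cdot\|_1$ the $\ell^1$-norm. $\mathrm{cl}_{G,N}$ is the word length on $[G,N]$ with respect to $\{[g,x]=gxg^{-1}x^{-1}:g\in G,x\in N\}$, and for $y_1,\dots,y_m\in N$ with product in $[G,N]$, $\mathrm{cl}_{G,N}(y_1+\cdots+y_m)=\inf_{g_i\in G}\mathrm{cl}_{G,N}(y_1g_1y_2g_1^{-1}\cdots g_{m-1}y_mg_{m-1}^{-1})$ (the hypothesis guarantees $x_1\cdots x_k\check x_1^{-1}\cdots\check x_l^{-1}\in[G,N]$).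 *)

theory Defs
  imports "HOL-Algebra.Algebra" "HOL-Analysis.Analysis"
begin

text \<open>Finitely supported chains. A 1-chain is a function from group elements to
coefficients; a 2-chain is a function from pairs of group elements to coefficients.\<close>

definition supp2 :: "('a \<times> 'a \<Rightarrow> 'r::zero) \<Rightarrow> ('a \<times> 'a) set" where
  "supp2 c = {p. c p \<noteq> 0}"

definition C2' :: "('a, 'b) monoid_scheme \<Rightarrow> 'a set \<Rightarrow> ('a \<times> 'a \<Rightarrow> 'r::zero) set" where
  "C2' G N = {c. finite (supp2 c) \<and>
     (\<forall>p \<in> supp2 c. fst p \<in> carrier G \<and> snd p \<in> carrier G \<and> (fst p \<in> N \<or> snd p \<in> N))}"

definition bd :: "('a, 'b) monoid_scheme \<Rightarrow> ('a \<times> 'a \<Rightarrow> 'r::comm_ring_1) \<Rightarrow> 'a \<Rightarrow> 'r" where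
  "bd G c = (\<lambda>h. \<Sum>p \<in> supp2 c. c p * (of_bool (h = snd p) - of_bool (h = fst p \<otimes>\<^bsub>G\<^esub> snd p)
                                       + of_bool (h = fst p)))"

definition B1' :: "('a, 'b) monoid_scheme \<Rightarrow> 'a set \<Rightarrow> ('a \<Rightarrow> 'r::comm_ring_1) set" where
  "B1' G N = bd G ` C2' G N"

definition l1norm :: "('a \<times> 'a \<Rightarrow> real) \<Rightarrow> real" where
  "l1norm c = (\<Sum>p \<in> supp2 c. \<bar>c p\<bar>)"

definition norm' :: "('a, 'b) monoid_scheme \<Rightarrow> 'a set \<Rightarrow> ('a \<Rightarrow> real) \<Rightarrow> real" where
  "norm' G N c = Inf {l1norm c' | c'. c' \<in> C2' G N \<and> bd G c' = c}"

definition chain_of :: "'a list \<Rightarrow> 'a \<Rightarrow> 'r::comm_ring_1" where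
  "chain_of ys = (\<lambda>h. of_nat (count_list ys h))"

definition commut :: "('a, 'b) monoid_scheme \<Rightarrow> 'a \<Rightarrow> 'a \<Rightarrow> 'a" where
  "commut G g x = g \<otimes>\<^bsub>G\<^esub> x \<otimes>\<^bsub>G\<^esub> inv\<^bsub>G\<^esub> g \<otimes>\<^bsub>G\<^esub> inv\<^bsub>G\<^esub> x"

definition cl :: "('a, 'b) monoid_scheme \<Rightarrow> 'a set \<Rightarrow> 'a \<Rightarrow> nat" where
  "cl G N y = (LEAST n. \<exists>ws. length ws = n \<and> set ws \<subseteq> carrier G \<times> N \<and>
      y = foldr (\<lambda>(g, x) acc. commut G g x \<otimes>\<^bsub>G\<^esub> acc) ws \<one>\<^bsub>G\<^esub>)"

text \<open>y_1 (g_1 y_2 g_1^-1) ... (g_{m-1} y_m g_{m-1}^-1) for ys = [y_1,...,y_m] (m >= 1).\<close>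
definition conj_prod :: "('a, 'b) monoid_scheme \<Rightarrow> 'a list \<Rightarrow> 'a list \<Rightarrow> 'a" where
  "conj_prod G ys gs = hd ys \<otimes>\<^bsub>G\<^esub>
     foldr (\<lambda>(g, y) acc. g \<otimes>\<^bsub>G\<^esub> y \<otimes>\<^bsub>G\<^esub> inv\<^bsub>G\<^esub> g \<otimes>\<^bsub>G\<^esub> acc) (zip gs (tl ys)) \<one>\<^bsub>G\<^esub>"

text \<open>cl_{G,N}(y_1 + ... + y_m) = inf over g_i in G of cl of the above product.\<close>
definition cl_sum :: "('a, 'b) monoid_scheme \<Rightarrow> 'a set \<Rightarrow> 'a list \<Rightarrow> nat" where
  "cl_sum G N ys = Inf {cl G N (conj_prod G ys gs) | gs.
      length gs = length ys - 1 \<and> set gs \<subseteq> carrier G}"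

end

theory Submission
  imports Defs
begin


definition mk :: "(real \<times> ('a\<times>'a)) list \<Rightarrow> 'a\<times>'a \<Rightarrow> real" where
  "mk L = (\<lambda>q. \<Sum>(s,p)\<leftarrow>L. if p = q then s else 0)"

definition EE :: "('a, 'b) monoid_scheme \<Rightarrow> 'a \<Rightarrow> 'a\<times>'a \<Rightarrow> 'r::comm_ring_1" where
  "EE G h p = of_bool (h = snd p) - of_bool (h = fst p \<otimes>\<^bsub>G\<^esub> snd p) + of_bool (h = fst p)"

definition BL :: "('a, 'b) monoid_scheme \<Rightarrow> (real \<times> ('a\<times>'a)) list \<Rightarrow> 'a \<Rightarrow> real" where
  "BL G L = (\<lambda>h. \<Sum>(s,p)\<leftarrow>L. s * EE G h p)"

lemma mk_Cons: "mk (a # L) q = (if snd a = q then fst a else 0) + mk L q"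
  by (cases a) (simp add: mk_def)

lemma mk_Nil[simp]: "mk [] q = 0" by (simp add: mk_def)

lemma mk_zero: "q \<notin> snd ` set L \<Longrightarrow> mk L q = 0"
  by (induction L) (auto simp: mk_Cons)

lemma supp2_mk: "supp2 (mk L) \<subseteq> snd ` set L"
proof (rule subsetI)
  fix p assume "p \<in> supp2 (mk L)"
  then have "mk L p \<noteq> 0" by (simp add: supp2_def)
  then show "p \<in> snd ` set L" using mk_zero[of p L] by blast
qed

lemma sum_mk: "finite S \<Longrightarrow> snd ` set L \<subseteq> S \<Longrightarrow> (\<Sum>p\<in>S. mk L p * EE G h p) = BL G L h"
proof (induction L)
  case Nil then show ?case by (simp add: mk_def BL_def)
next
  case (Cons a L)
  obtain s q where a: "a = (s,q)" by (cases a) auto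
  have qS: "q \<in> S" using Cons a by auto
  have "(\<Sum>p\<in>S. mk (a#L) p * EE G h p) = (\<Sum>p\<in>S. (if q = p then s * EE G h p else 0)) + (\<Sum>p\<in>S. mk L p * EE G h p)"
    unfolding sum.distrib[symmetric] by (rule sum.cong) (auto simp: mk_Cons a distrib_right)
  also have "\<dots> = s * EE G h q + BL G L h" using Cons qS by simp
  finally show ?case by (simp add: BL_def a)
qed

lemma bd_mk: "bd G (mk L) = BL G L"
proof
  fix h
  have "bd G (mk L) h = (\<Sum>p\<in>supp2 (mk L). mk L p * EE G h p)"
    by (simp add: bd_def EE_def)
  also have "\<dots> = (\<Sum>p\<in>snd ` set L. mk L p * EE G h p)"
    apply (rule sum.mono_neutral_left)
      apply simp
     apply (rule supp2_mk)
    apply (simp add: supp2_def)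
    done
  also have "\<dots> = BL G L h" by (rule sum_mk) auto
  finally show "bd G (mk L) h = BL G L h" .
qed

lemma sum_abs_mk: "finite S \<Longrightarrow> (\<Sum>p\<in>S. \<bar>mk L p\<bar>) \<le> (\<Sum>(s,p)\<leftarrow>L. \<bar>s\<bar>)"
proof (induction L)
  case Nil then show ?case by (simp add: mk_def)
next
  case (Cons a L)
  obtain s q where a: "a = (s,q)" by (cases a) auto
  have "(\<Sum>p\<in>S. \<bar>mk (a#L) p\<bar>) \<le> (\<Sum>p\<in>S. \<bar>if q = p then s else 0\<bar> + \<bar>mk L p\<bar>)"
    by (rule sum_mono) (simp add: mk_Cons a abs_triangle_ineq)
  also have "\<dots> = (\<Sum>p\<in>S. (if q = p then \<bar>s\<bar> else 0)) + (\<Sum>p\<in>S. \<bar>mk L p\<bar>)"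
    unfolding sum.distrib[symmetric] by (rule sum.cong) auto
  also have "\<dots> \<le> \<bar>s\<bar> + (\<Sum>(s,p)\<leftarrow>L. \<bar>s\<bar>)"
    using Cons by (intro add_mono) (auto)
  finally show ?case by (simp add: a)
qed

definition valid :: "('a, 'b) monoid_scheme \<Rightarrow> 'a set \<Rightarrow> (real \<times> ('a\<times>'a)) list \<Rightarrow> bool" where
  "valid G N L = (\<forall>(s,p)\<in>set L. \<bar>s\<bar> \<le> 1 \<and> fst p \<in> carrier G \<and> snd p \<in> carrier G \<and> (fst p \<in> N \<or> snd p \<in> N))"

lemma l1norm_mk: "valid G N L \<Longrightarrow> l1norm (mk L) \<le> length L"
proof -
  assume v: "valid G N L"
  have "l1norm (mk L) \<le> (\<Sum>(s,p)\<leftarrow>L. \<bar>s\<bar>)"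
    unfolding l1norm_def by (rule sum_abs_mk) (meson finite_imageI List.finite_set finite_subset supp2_mk)
  also have "\<dots> \<le> (\<Sum>(s,p)\<leftarrow>L. 1)"
    using v unfolding valid_def by (intro sum_list_mono) auto
  also have "\<dots> = length L" by (induction L) auto
  finally show ?thesis .
qed

lemma mk_C2': "valid G N L \<Longrightarrow> mk L \<in> C2' G N"
proof -
  assume v: "valid G N L"
  have "finite (supp2 (mk L))" using supp2_mk[of L] by (auto intro: finite_subset)
  moreover have "fst p \<in> carrier G \<and> snd p \<in> carrier G \<and> (fst p \<in> N \<or> snd p \<in> N)" if "p \<in> supp2 (mk L)" for p
  proof -
    from that supp2_mk[of L] have "p \<in> snd ` set L" by blast
    then obtain x where x: "x \<in> set L" "p = snd x" by blast
    then have "(fst x, p) \<in> set L" by simp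
    then show ?thesis using v unfolding valid_def by fastforce
  qed
  ultimately show ?thesis unfolding C2'_def by blast
qed

lemma norm'_le: "valid G N L \<Longrightarrow> bd G (mk L) = c \<Longrightarrow> norm' G N c \<le> length L"
proof -
  assume v: "valid G N L" and b: "bd G (mk L) = c"
  have "norm' G N c \<le> l1norm (mk L)"
    unfolding norm'_def
  proof (rule cInf_lower)
    show "l1norm (mk L) \<in> {l1norm c' |c'. c' \<in> C2' G N \<and> bd G c' = c}"
      using mk_C2'[OF v] b by blast
    show "bdd_below {l1norm c' |c'. c' \<in> C2' G N \<and> bd G c' = c}"
      by (rule bdd_belowI[of _ 0]) (auto simp: l1norm_def)
  qed
  then show ?thesis using l1norm_mk[OF v] by linarith
qed

definition negL :: "(real \<times> ('a\<times>'a)) list \<Rightarrow> (real \<times> ('a\<times>'a)) list" where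
  "negL L = map (\<lambda>(s,p). (-s,p)) L"

lemma BL_append: "BL G (L1 @ L2) h = BL G L1 h + BL G L2 h"
  by (auto simp: BL_def)

lemma BL_negL: "BL G (negL L) h = - BL G L h"
  by (induction L) (auto simp: BL_def negL_def case_prod_beta)

lemma valid_append: "valid G N (L1 @ L2) = (valid G N L1 \<and> valid G N L2)"
  by (auto simp: valid_def)

lemma valid_negL: "valid G N (negL L) = valid G N L"
  by (auto simp: valid_def negL_def)

lemma length_negL[simp]: "length (negL L) = length L" by (simp add: negL_def)




definition dl :: "'a \<Rightarrow> 'a \<Rightarrow> real" where "dl a h = of_bool (h = a)"

context group begin

lemma step_conj:
  assumes nN: "N \<lhd> G" and a: "a \<in> N" and g: "g \<in> carrier G" and x: "x \<in> N"
  shows "\<exists>L. length L = 3 \<and> valid G N L \<and>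
    (\<forall>h. BL G L h = dl (a \<otimes> (g \<otimes> x \<otimes> inv g)) h - dl x h - dl a h)"
proof -
  interpret normal N G by (rule nN)
  have ac: "a \<in> carrier G" and xc: "x \<in> carrier G" using a x by auto
  define b where "b = a \<otimes> (g \<otimes> x \<otimes> inv g)"
  have bN: "b \<in> N" unfolding b_def using a x g by (simp add: inv_op_closed2)
  have bg: "b \<otimes> g = a \<otimes> g \<otimes> x" unfolding b_def using ac xc g by (simp add: m_assoc)
  let ?L = "[(1::real,(b,g)), (-1,(a\<otimes>g,x)), (-1,(a,g))]"
  have "valid G N ?L" unfolding valid_def using a x g bN ac xc by auto
  moreover have "BL G ?L h = dl b h - dl x h - dl a h" for h
    unfolding BL_def EE_def dl_def using bg by simp
  ultimately show ?thesis unfolding b_def[symmetric] by (intro exI[of _ ?L]) auto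
qed

lemma step_comm:
  assumes nN: "N \<lhd> G" and a: "a \<in> N" and g: "g \<in> carrier G" and x: "x \<in> N"
  shows "\<exists>L. length L = 4 \<and> valid G N L \<and>
    (\<forall>h. BL G L h = dl (a \<otimes> commut G g x) h - dl a h)"
proof -
  interpret normal N G by (rule nN)
  have ac: "a \<in> carrier G" and xc: "x \<in> carrier G" using a x by auto
  define R where "R = a \<otimes> commut G g x"
  have RN: "R \<in> N" unfolding R_def commut_def using a x g
    by (simp add: inv_op_closed2)
  have e1: "inv x \<otimes> (x \<otimes> g) = g" using xc g by (simp add: m_assoc[symmetric])
  have Rg: "R \<otimes> (x \<otimes> g) = a \<otimes> g \<otimes> x" unfolding R_def commut_def using ac xc g e1 by (simp add: m_assoc)
  let ?L = "[(1::real,(R,x \<otimes> g)), (-1,(a\<otimes>g,x)), (-1,(a,g)), (1,(x,g))]"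
  have "valid G N ?L" unfolding valid_def using a x g RN ac xc by auto
  moreover have "BL G ?L h = dl R h - dl a h" for h
    unfolding BL_def EE_def dl_def using Rg by simp
  ultimately show ?thesis unfolding R_def[symmetric] by (intro exI[of _ ?L]) auto
qed

end



definition tval :: "('a, 'b) monoid_scheme \<Rightarrow> 'a \<times> bool \<Rightarrow> 'a" where
  "tval G t = (if snd t then fst t else inv\<^bsub>G\<^esub> (fst t))"

definition con :: "'a \<times> bool \<Rightarrow> 'a \<Rightarrow> real" where
  "con t h = (if snd t then dl (fst t) h else - dl (fst t) h)"

definition FF :: "('a, 'b) monoid_scheme \<Rightarrow> ('a \<times> ('a \<times> bool)) list \<Rightarrow> 'a" where
  "FF G l = foldr (\<lambda>(g, t) acc. g \<otimes>\<^bsub>G\<^esub> tval G t \<otimes>\<^bsub>G\<^esub> inv\<^bsub>G\<^esub> g \<otimes>\<^bsub>G\<^esub> acc) l \<one>\<^bsub>G\<^esub>"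

definition CP :: "('a, 'b) monoid_scheme \<Rightarrow> ('a \<times> 'a) list \<Rightarrow> 'a" where
  "CP G ws = foldr (\<lambda>(g, x) acc. commut G g x \<otimes>\<^bsub>G\<^esub> acc) ws \<one>\<^bsub>G\<^esub>"

context group begin

lemma cancel1[simp]: "x \<in> carrier G \<Longrightarrow> z \<in> carrier G \<Longrightarrow> inv x \<otimes> (x \<otimes> z) = z"
  by (simp add: m_assoc[symmetric])
lemma cancel2[simp]: "x \<in> carrier G \<Longrightarrow> z \<in> carrier G \<Longrightarrow> x \<otimes> (inv x \<otimes> z) = z"
  by (simp add: m_assoc[symmetric])

lemma tval_closed: "N \<lhd> G \<Longrightarrow> fst t \<in> N \<Longrightarrow> tval G t \<in> N"
  unfolding tval_def by (auto intro: subgroup.m_inv_closed normal_imp_subgroup)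

lemma FF_closed: "N \<lhd> G \<Longrightarrow> fst ` set l \<subseteq> carrier G \<Longrightarrow> (fst \<circ> snd) ` set l \<subseteq> N \<Longrightarrow> FF G l \<in> carrier G"
proof (induction l)
  case Nil then show ?case by (simp add: FF_def)
next
  case (Cons a l)
  interpret normal N G by (rule Cons.prems(1))
  obtain g t where a: "a = (g,t)" by (cases a) auto
  have "tval G t \<in> carrier G" using tval_closed[OF Cons.prems(1), of t] Cons.prems a by auto
  then show ?case using Cons a by (auto simp: FF_def)
qed

lemma CP_closed: "N \<lhd> G \<Longrightarrow> set ws \<subseteq> carrier G \<times> N \<Longrightarrow> CP G ws \<in> carrier G"
proof (induction ws)
  case Nil then show ?case by (simp add: CP_def)
next
  case (Cons a ws)
  interpret normal N G by (rule Cons.prems(1))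
  obtain g x where a: "a = (g,x)" by (cases a) auto
  then show ?case using Cons a by (auto simp: CP_def commut_def)
qed

lemma step_first:
  assumes nN: "N \<lhd> G" and y: "fst t \<in> N"
  shows "\<exists>L. length L = 1 \<and> valid G N L \<and> (\<forall>h. BL G L h = dl (tval G t) h - dl \<one> h - con t h)"
proof -
  interpret normal N G by (rule nN)
  obtain y b where t: "t = (y,b)" by (cases t) auto
  have yc: "y \<in> carrier G" using y t by auto
  show ?thesis
  proof (cases b)
    case True
    let ?L = "[(-1::real,(\<one>,\<one>))]"
    have "valid G N ?L" unfolding valid_def by (auto simp: subgroup.one_closed)
    moreover have "BL G ?L h = dl (tval G t) h - dl \<one> h - con t h" for h
      unfolding BL_def EE_def dl_def con_def tval_def using t True by simp
    ultimately show ?thesis by (intro exI[of _ ?L]) auto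
  next
    case False
    let ?L = "[(1::real,(y,inv y))]"
    have "valid G N ?L" unfolding valid_def using y t yc by auto
    moreover have "BL G ?L h = dl (tval G t) h - dl \<one> h - con t h" for h
      unfolding BL_def EE_def dl_def con_def tval_def using t False yc by simp
    ultimately show ?thesis by (intro exI[of _ ?L]) auto
  qed
qed

lemma chain_FF:
  assumes nN: "N \<lhd> G"
  shows "fst ` set l \<subseteq> carrier G \<Longrightarrow> (fst \<circ> snd) ` set l \<subseteq> N \<Longrightarrow> a \<in> N \<Longrightarrow>
    \<exists>L. length L \<le> 3 * length l \<and> valid G N L \<and>
      (\<forall>h. BL G L h = dl (a \<otimes> FF G l) h - dl a h - (\<Sum>(g,t)\<leftarrow>l. con t h))"
proof (induction l arbitrary: a)
  case Nil
  interpret normal N G by (rule nN)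
  have "a \<in> carrier G" using Nil by auto
  then show ?case by (intro exI[of _ "[]"]) (auto simp: valid_def BL_def FF_def)
next
  case (Cons p l)
  interpret normal N G by (rule nN)
  obtain g t where p: "p = (g,t)" by (cases p) auto
  obtain y bb where t: "t = (y,bb)" by (cases t) auto
  have g: "g \<in> carrier G" and yN: "y \<in> N" using Cons.prems p t by auto
  have yc: "y \<in> carrier G" using yN by auto
  have ac: "a \<in> carrier G" using Cons.prems by auto
  define b where "b = a \<otimes> (g \<otimes> tval G t \<otimes> inv g)"
  have tc: "tval G t \<in> carrier G" using tval_closed[OF nN, of t] yN t by auto
  have bN: "b \<in> N" unfolding b_def using Cons.prems tval_closed[OF nN, of t] yN t g
    by (simp add: inv_op_closed2)
  have Fc: "FF G l \<in> carrier G" using FF_closed[OF nN, of l] Cons.prems by auto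
  have eq: "a \<otimes> FF G (p # l) = b \<otimes> FF G l"
    unfolding b_def using p ac g tc Fc by (simp add: FF_def m_assoc)
  obtain L2 where L2: "length L2 \<le> 3 * length l" "valid G N L2"
     "\<forall>h. BL G L2 h = dl (b \<otimes> FF G l) h - dl b h - (\<Sum>(g,t)\<leftarrow>l. con t h)"
    using Cons.IH[OF _ _ bN] Cons.prems by auto
  obtain L1 where L1: "length L1 \<le> 3" "valid G N L1" "\<forall>h. BL G L1 h = dl b h - dl a h - con t h"
  proof (cases bb)
    case True
    obtain L where L: "length L = 3" "valid G N L" "\<forall>h. BL G L h = dl (a \<otimes> (g \<otimes> y \<otimes> inv g)) h - dl y h - dl a h"
      using step_conj[OF nN Cons.prems(3) g yN] by auto
    show ?thesis
      apply (rule that[of L])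
      using L t True unfolding b_def tval_def con_def by auto
  next
    case False
    have ab: "a = b \<otimes> (g \<otimes> y \<otimes> inv g)"
      unfolding b_def tval_def using t False ac g yc by (simp add: m_assoc)
    obtain L where L: "length L = 3" "valid G N L" "\<forall>h. BL G L h = dl (b \<otimes> (g \<otimes> y \<otimes> inv g)) h - dl y h - dl b h"
      using step_conj[OF nN bN g yN] by auto
    show ?thesis
      apply (rule that[of "negL L"])
      using L ab t False by (auto simp: valid_negL BL_negL con_def)
  qed
  show ?case
    apply (rule exI[of _ "L1 @ L2"])
    using L1 L2 eq p by (auto simp: valid_append BL_append)
qed

lemma chain_CP:
  assumes nN: "N \<lhd> G"
  shows "set ws \<subseteq> carrier G \<times> N \<Longrightarrow> a \<in> N \<Longrightarrow>
    \<exists>L. length L \<le> 4 * length ws \<and> valid G N L \<and>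
      (\<forall>h. BL G L h = dl (a \<otimes> CP G ws) h - dl a h)"
proof (induction ws arbitrary: a)
  case Nil
  interpret normal N G by (rule nN)
  have "a \<in> carrier G" using Nil by auto
  then show ?case by (intro exI[of _ "[]"]) (auto simp: valid_def BL_def CP_def)
next
  case (Cons p ws)
  interpret normal N G by (rule nN)
  obtain g x where p: "p = (g,x)" by (cases p) auto
  have g: "g \<in> carrier G" and xN: "x \<in> N" using Cons.prems p by auto
  have xc: "x \<in> carrier G" using xN by auto
  have ac: "a \<in> carrier G" using Cons.prems by auto
  define b where "b = a \<otimes> commut G g x"
  have cc: "commut G g x \<in> carrier G" unfolding commut_def using g xc by auto
  have bN: "b \<in> N" unfolding b_def commut_def using Cons.prems g xN by (simp add: inv_op_closed2)
  have Cc: "CP G ws \<in> carrier G" using CP_closed[OF nN, of ws] Cons.prems by auto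
  have eq: "a \<otimes> CP G (p # ws) = b \<otimes> CP G ws"
    unfolding b_def using p ac cc Cc by (simp add: CP_def m_assoc)
  obtain L2 where L2: "length L2 \<le> 4 * length ws" "valid G N L2"
     "\<forall>h. BL G L2 h = dl (b \<otimes> CP G ws) h - dl b h"
    using Cons.IH[OF _ bN] Cons.prems by auto
  obtain L1 where L1: "length L1 = 4" "valid G N L1" "\<forall>h. BL G L1 h = dl b h - dl a h"
    using step_comm[OF nN Cons.prems(2) g xN] unfolding b_def by auto
  show ?case
    apply (rule exI[of _ "L1 @ L2"])
    using L1 L2 eq p by (auto simp: valid_append BL_append)
qed

end



definition Wc :: "('a, 'b) monoid_scheme \<Rightarrow> 'a set \<Rightarrow> 'a set" where
  "Wc G N = {y. \<exists>ws. set ws \<subseteq> carrier G \<times> N \<and> y = CP G ws}"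

context group begin

lemma CP_append:
  assumes nN: "N \<lhd> G" shows "set ws1 \<subseteq> carrier G \<times> N \<Longrightarrow> set ws2 \<subseteq> carrier G \<times> N \<Longrightarrow>
   CP G (ws1 @ ws2) = CP G ws1 \<otimes> CP G ws2"
proof (induction ws1)
  case Nil then show ?case using CP_closed[OF nN, of ws2] by (simp add: CP_def)
next
  case (Cons p ws1)
  interpret normal N G by (rule nN)
  obtain g x where p: "p = (g,x)" by (cases p) auto
  have cc: "commut G g x \<in> carrier G" unfolding commut_def using Cons.prems p by auto
  have "CP G (p # ws1 @ ws2) = commut G g x \<otimes> CP G (ws1 @ ws2)" by (simp add: CP_def p)
  also have "\<dots> = commut G g x \<otimes> (CP G ws1 \<otimes> CP G ws2)" using Cons by simp
  also have "\<dots> = (commut G g x \<otimes> CP G ws1) \<otimes> CP G ws2"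
    using cc CP_closed[OF nN, of ws1] CP_closed[OF nN, of ws2] Cons.prems by (simp add: m_assoc)
  finally show ?case by (simp add: CP_def p)
qed

lemma Wc_mult: "N \<lhd> G \<Longrightarrow> a \<in> Wc G N \<Longrightarrow> b \<in> Wc G N \<Longrightarrow> a \<otimes> b \<in> Wc G N"
proof -
  assume nN: "N \<lhd> G" and a: "a \<in> Wc G N" and b: "b \<in> Wc G N"
  obtain ws1 where 1: "set ws1 \<subseteq> carrier G \<times> N" "a = CP G ws1" using a unfolding Wc_def by blast
  obtain ws2 where 2: "set ws2 \<subseteq> carrier G \<times> N" "b = CP G ws2" using b unfolding Wc_def by blast
  have "a \<otimes> b = CP G (ws1 @ ws2)" using CP_append[OF nN 1(1) 2(1)] 1 2 by simp
  moreover have "set (ws1 @ ws2) \<subseteq> carrier G \<times> N" using 1 2 by auto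
  ultimately show ?thesis unfolding Wc_def by blast
qed

lemma commut_Wc: "N \<lhd> G \<Longrightarrow> g \<in> carrier G \<Longrightarrow> x \<in> N \<Longrightarrow> commut G g x \<in> Wc G N"
proof -
  assume nN: "N \<lhd> G" and g: "g \<in> carrier G" and x: "x \<in> N"
  interpret normal N G by (rule nN)
  have "commut G g x \<in> carrier G" unfolding commut_def using g x by auto
  then have "commut G g x = CP G [(g,x)]" by (simp add: CP_def)
  moreover have "set [(g,x)] \<subseteq> carrier G \<times> N" using g x by auto
  ultimately show ?thesis unfolding Wc_def by blast
qed

lemma one_Wc: "\<one> \<in> Wc G N" unfolding Wc_def by (auto intro: exI[of _ "[]"] simp: CP_def)

lemma Wc_carrier: "N \<lhd> G \<Longrightarrow> Wc G N \<subseteq> carrier G"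
  unfolding Wc_def using CP_closed by blast

lemma commut_N: "N \<lhd> G \<Longrightarrow> g \<in> carrier G \<Longrightarrow> x \<in> N \<Longrightarrow> commut G g x \<in> N"
proof -
  assume nN: "N \<lhd> G" and g: "g \<in> carrier G" and x: "x \<in> N"
  interpret normal N G by (rule nN)
  show ?thesis unfolding commut_def using g x by (simp add: inv_op_closed2)
qed

lemma CP_N: "N \<lhd> G \<Longrightarrow> set ws \<subseteq> carrier G \<times> N \<Longrightarrow> CP G ws \<in> N"
proof (induction ws)
  case Nil then show ?case by (simp add: CP_def normal_imp_subgroup subgroup.one_closed)
next
  case (Cons p ws)
  obtain g x where p: "p = (g,x)" by (cases p) auto
  then show ?case using Cons commut_N[OF Cons.prems(1), of g x]
    by (auto simp: CP_def dest: normal_imp_subgroup intro: subgroup.m_closed)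
qed

lemma Wc_N: "N \<lhd> G \<Longrightarrow> Wc G N \<subseteq> N"
  unfolding Wc_def using CP_N by blast

lemma inv_commut: "g \<in> carrier G \<Longrightarrow> x \<in> carrier G \<Longrightarrow> inv (commut G g x) = commut G (x \<otimes> g) (inv x)"
  unfolding commut_def by (simp add: inv_mult_group m_assoc)

lemma Wc_inv: assumes nN: "N \<lhd> G" shows "set ws \<subseteq> carrier G \<times> N \<Longrightarrow> inv (CP G ws) \<in> Wc G N"
proof (induction ws)
  case Nil then show ?case by (simp add: CP_def one_Wc)
next
  case (Cons p ws)
  interpret normal N G by (rule nN)
  obtain g x where p: "p = (g,x)" by (cases p) auto
  have g: "g \<in> carrier G" and x: "x \<in> N" using Cons.prems p by auto
  have xc: "x \<in> carrier G" using x by auto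
  have cc: "commut G g x \<in> carrier G" unfolding commut_def using g xc by auto
  have "inv (CP G (p # ws)) = inv (CP G ws) \<otimes> inv (commut G g x)"
    using CP_closed[OF nN, of ws] Cons.prems cc by (simp add: CP_def p inv_mult_group)
  also have "\<dots> \<in> Wc G N"
    using Cons g xc x by (auto simp: inv_commut intro!: Wc_mult[OF nN] commut_Wc[OF nN])
  finally show ?case .
qed

lemma Wc_subgroup: "N \<lhd> G \<Longrightarrow> subgroup (Wc G N) G"
proof -
  assume nN: "N \<lhd> G"
  show ?thesis
  proof (rule subgroupI)
    show "Wc G N \<subseteq> carrier G" by (rule Wc_carrier[OF nN])
    show "Wc G N \<noteq> {}" using one_Wc by blast
    show "inv a \<in> Wc G N" if "a \<in> Wc G N" for a
      using that Wc_inv[OF nN] unfolding Wc_def[of G N] by blast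
    show "a \<otimes> b \<in> Wc G N" if "a \<in> Wc G N" "b \<in> Wc G N" for a b
      using that by (rule Wc_mult[OF nN])
  qed
qed

lemma Wc_normal: assumes nN: "N \<lhd> G" shows "Wc G N \<lhd> G"
proof -
  have "x \<otimes> h \<otimes> inv x \<in> Wc G N" if x: "x \<in> carrier G" and h: "h \<in> Wc G N" for x h
  proof -
    have hN: "h \<in> N" using h Wc_N[OF nN] by auto
    have hc: "h \<in> carrier G" using h Wc_carrier[OF nN] by auto
    have "x \<otimes> h \<otimes> inv x = commut G x h \<otimes> h"
      unfolding commut_def using x hc by (simp add: m_assoc)
    also have "\<dots> \<in> Wc G N" using commut_Wc[OF nN x hN] h by (rule Wc_mult[OF nN])
    finally show ?thesis .
  qed
  then show ?thesis using normal_inv_iff Wc_subgroup[OF nN] by blast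
qed

end



definition QQ :: "('a, 'b) monoid_scheme \<Rightarrow> 'a set \<Rightarrow> 'a set monoid" where
  "QQ G N = \<lparr>carrier = (\<lambda>a. Wc G N #>\<^bsub>G\<^esub> a) ` N, monoid.mult = set_mult G, one = Wc G N\<rparr>"

definition sig :: "('a, 'b) monoid_scheme \<Rightarrow> 'a set \<Rightarrow> 'a \<Rightarrow> 'a" where
  "sig G N g = (if N #>\<^bsub>G\<^esub> g = N then \<one>\<^bsub>G\<^esub> else (SOME r. r \<in> N #>\<^bsub>G\<^esub> g))"

definition psi :: "('a, 'b) monoid_scheme \<Rightarrow> 'a set \<Rightarrow> 'a \<Rightarrow> 'a" where
  "psi G N g = g \<otimes>\<^bsub>G\<^esub> inv\<^bsub>G\<^esub> (sig G N g)"

context group begin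

lemma class_eqI:
  assumes nN: "N \<lhd> G" and a: "a \<in> carrier G" and b: "b \<in> carrier G"
    and ab: "a \<otimes> inv b \<in> Wc G N"
  shows "Wc G N #> a = Wc G N #> b"
proof -
  interpret W: subgroup "Wc G N" G by (rule Wc_subgroup[OF nN])
  have "a \<in> Wc G N #> b" using W.rcos_module_rev[OF is_group b a ab] .
  then show ?thesis using repr_independence[OF _ b W.subgroup_axioms] by simp
qed

lemma QQ_comm_group: assumes nN: "N \<lhd> G" shows "comm_group (QQ G N)"
proof -
  interpret N: normal N G by (rule nN)
  interpret W: normal "Wc G N" G by (rule Wc_normal[OF nN])
  have sum: "(Wc G N #> a) <#> (Wc G N #> b) = Wc G N #> (a \<otimes> b)" if "a \<in> N" "b \<in> N" for a b
    using that by (intro W.rcos_sum) auto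
  have one: "Wc G N = Wc G N #> \<one>" using Wc_carrier[OF nN] by (simp add: coset_mult_one)
  show ?thesis
  proof (rule comm_groupI)
    fix x y assume "x \<in> carrier (QQ G N)" "y \<in> carrier (QQ G N)"
    then obtain a b where ab: "a \<in> N" "b \<in> N" "x = Wc G N #> a" "y = Wc G N #> b"
      unfolding QQ_def by auto
    show "x \<otimes>\<^bsub>QQ G N\<^esub> y \<in> carrier (QQ G N)"
      using ab sum unfolding QQ_def by (auto intro: N.m_closed)
    have "Wc G N #> (a \<otimes> b) = Wc G N #> (b \<otimes> a)"
    proof (rule class_eqI[OF nN])
      have ac: "a \<in> carrier G" "b \<in> carrier G" using ab by auto
      then show "a \<otimes> b \<in> carrier G" "b \<otimes> a \<in> carrier G" by auto
      have "a \<otimes> b \<otimes> inv (b \<otimes> a) = commut G a b"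
        unfolding commut_def using ac by (simp add: inv_mult_group m_assoc)
      then show "a \<otimes> b \<otimes> inv (b \<otimes> a) \<in> Wc G N" using commut_Wc[OF nN] ac ab by simp
    qed
    then show "x \<otimes>\<^bsub>QQ G N\<^esub> y = y \<otimes>\<^bsub>QQ G N\<^esub> x"
      using ab sum unfolding QQ_def by auto
  next
    show "\<one>\<^bsub>QQ G N\<^esub> \<in> carrier (QQ G N)" unfolding QQ_def using one N.one_closed by auto
  next
    fix x y z assume "x \<in> carrier (QQ G N)" "y \<in> carrier (QQ G N)" "z \<in> carrier (QQ G N)"
    then obtain a b c where abc: "a \<in> N" "b \<in> N" "c \<in> N" "x = Wc G N #> a" "y = Wc G N #> b" "z = Wc G N #> c"
      unfolding QQ_def by auto
    have ac: "a \<in> carrier G" "b \<in> carrier G" "c \<in> carrier G" using abc by auto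
    show "x \<otimes>\<^bsub>QQ G N\<^esub> y \<otimes>\<^bsub>QQ G N\<^esub> z = x \<otimes>\<^bsub>QQ G N\<^esub> (y \<otimes>\<^bsub>QQ G N\<^esub> z)"
      using abc sum ac unfolding QQ_def by (simp add: N.m_closed m_assoc)
  next
    fix x assume "x \<in> carrier (QQ G N)"
    then obtain a where a: "a \<in> N" "x = Wc G N #> a" unfolding QQ_def by auto
    have ac: "a \<in> carrier G" using a by auto
    show "\<one>\<^bsub>QQ G N\<^esub> \<otimes>\<^bsub>QQ G N\<^esub> x = x"
      using a sum[of \<one> a] one ac unfolding QQ_def by simp
    have "inv a \<in> N" using a by auto
    moreover have "(Wc G N #> inv a) \<otimes>\<^bsub>QQ G N\<^esub> x = \<one>\<^bsub>QQ G N\<^esub>"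
      using a sum[of "inv a" a] one ac \<open>inv a \<in> N\<close> unfolding QQ_def by simp
    ultimately show "\<exists>y\<in>carrier (QQ G N). y \<otimes>\<^bsub>QQ G N\<^esub> x = \<one>\<^bsub>QQ G N\<^esub>"
      unfolding QQ_def by auto
  qed
qed

lemma sig_in: assumes nN: "N \<lhd> G" and g: "g \<in> carrier G" shows "sig G N g \<in> N #> g"
proof (cases "N #> g = N")
  case True
  then show ?thesis unfolding sig_def using nN by (simp add: normal_imp_subgroup subgroup.one_closed)
next
  case False
  have "g \<in> N #> g" using rcos_self[OF g normal_imp_subgroup[OF nN]] .
  then show ?thesis unfolding sig_def using False someI[of "\<lambda>r. r \<in> N #> g" g] by simp
qed

lemma sig_carrier: "N \<lhd> G \<Longrightarrow> g \<in> carrier G \<Longrightarrow> sig G N g \<in> carrier G"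
  using sig_in normal_imp_subgroup subgroup.rcosets_carrier
  by (metis is_group rcosetsI subgroup.subset subsetD)

lemma psi_N: assumes nN: "N \<lhd> G" and g: "g \<in> carrier G" shows "psi G N g \<in> N"
proof -
  interpret N: normal N G by (rule nN)
  have s: "sig G N g \<in> carrier G" by (rule sig_carrier[OF nN g])
  have "sig G N g \<otimes> inv g \<in> N" using N.rcos_module_imp[OF is_group g sig_in[OF nN g]] .
  then have "inv (sig G N g \<otimes> inv g) \<in> N" by auto
  then show ?thesis unfolding psi_def using s g by (simp add: inv_mult_group)
qed

lemma psi_id: assumes nN: "N \<lhd> G" and g: "g \<in> N" shows "psi G N g = g"
proof -
  interpret N: normal N G by (rule nN)
  have "N #> g = N" by (rule N.rcos_const[OF is_group g])
  then show ?thesis unfolding psi_def sig_def using g by auto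
qed

lemma conj_class:
  assumes nN: "N \<lhd> G" and g: "g \<in> carrier G" and y: "y \<in> N"
  shows "Wc G N #> (g \<otimes> y \<otimes> inv g) = Wc G N #> y"
proof -
  interpret N: normal N G by (rule nN)
  have yc: "y \<in> carrier G" using y by auto
  show ?thesis
  proof (rule class_eqI[OF nN])
    show "g \<otimes> y \<otimes> inv g \<in> carrier G" "y \<in> carrier G" using g yc by auto
    have "g \<otimes> y \<otimes> inv g \<otimes> inv y = commut G g y" unfolding commut_def ..
    then show "g \<otimes> y \<otimes> inv g \<otimes> inv y \<in> Wc G N" using commut_Wc[OF nN g y] by simp
  qed
qed

lemma psi_cocycle:
  assumes nN: "N \<lhd> G" and g1: "g1 \<in> carrier G" and g2: "g2 \<in> carrier G"
    and or: "g1 \<in> N \<or> g2 \<in> N"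
  shows "Wc G N #> psi G N (g1 \<otimes> g2) = Wc G N #> (psi G N g1 \<otimes> psi G N g2)"
proof -
  interpret N: normal N G by (rule nN)
  interpret W: normal "Wc G N" G by (rule Wc_normal[OF nN])
  have g12: "g1 \<otimes> g2 \<in> carrier G" using g1 g2 by auto
  show ?thesis
  proof (cases "g1 \<in> N")
    case True
    have "N #> g1 #> g2 = N #> (g1 \<otimes> g2)" by (rule coset_mult_assoc) (use g1 g2 in auto)
    then have "N #> (g1 \<otimes> g2) = N #> g2"
      using N.rcos_const[OF is_group True] by simp
    then have "sig G N (g1 \<otimes> g2) = sig G N g2" unfolding sig_def by simp
    then have "psi G N (g1 \<otimes> g2) = g1 \<otimes> psi G N g2" unfolding psi_def
      using g1 g2 sig_carrier[OF nN g2] by (simp add: m_assoc)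
    then show ?thesis using psi_id[OF nN True] by simp
  next
    case False
    then have g2N: "g2 \<in> N" using or by auto
    have "g1 \<otimes> g2 \<otimes> inv g1 \<in> N" using g1 g2N by (simp add: N.inv_op_closed2)
    then have "g1 \<otimes> g2 \<in> N #> g1" using N.rcos_module_rev[OF is_group g1 g12] by simp
    then have "N #> g1 = N #> (g1 \<otimes> g2)" by (rule repr_independence[OF _ g1 N.subgroup_axioms])
    then have sg: "sig G N (g1 \<otimes> g2) = sig G N g1" unfolding sig_def by simp
    define s where "s = sig G N g1"
    have s: "s \<in> carrier G" unfolding s_def by (rule sig_carrier[OF nN g1])
    have g2c: "g2 \<in> carrier G" by (rule g2)
    have "Wc G N #> (g1 \<otimes> g2 \<otimes> inv s) = Wc G N #> (g1 \<otimes> inv s \<otimes> g2)"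
    proof (rule class_eqI[OF nN])
      show "g1 \<otimes> g2 \<otimes> inv s \<in> carrier G" "g1 \<otimes> inv s \<otimes> g2 \<in> carrier G" using g1 g2 s by auto
      have sc: "s \<in> carrier G" by (rule s)
      have "(g1 \<otimes> inv s) \<otimes> commut G s g2 \<otimes> inv (g1 \<otimes> inv s) \<in> Wc G N"
        using commut_Wc[OF nN sc g2N] g1 sc by (intro W.inv_op_closed2) auto
      moreover have "g1 \<otimes> g2 \<otimes> inv s \<otimes> inv (g1 \<otimes> inv s \<otimes> g2) = (g1 \<otimes> inv s) \<otimes> commut G s g2 \<otimes> inv (g1 \<otimes> inv s)"
        unfolding commut_def using g1 g2 sc by (simp add: inv_mult_group m_assoc)
      ultimately show "g1 \<otimes> g2 \<otimes> inv s \<otimes> inv (g1 \<otimes> inv s \<otimes> g2) \<in> Wc G N" by simp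
    qed
    moreover have "psi G N (g1 \<otimes> g2) = g1 \<otimes> g2 \<otimes> inv s" unfolding psi_def sg s_def ..
    moreover have "psi G N g1 \<otimes> psi G N g2 = g1 \<otimes> inv s \<otimes> g2"
      unfolding psi_id[OF nN g2N] unfolding psi_def s_def ..
    ultimately show ?thesis by simp
  qed
qed

end



definition PHI :: "('a, 'b) monoid_scheme \<Rightarrow> 'a set \<Rightarrow> 'a set \<Rightarrow> ('a \<Rightarrow> int) \<Rightarrow> 'a set" where
  "PHI G N S f = finprod (QQ G N) (\<lambda>h. (Wc G N #>\<^bsub>G\<^esub> psi G N h) [^]\<^bsub>QQ G N\<^esub> f h) S"

locale phictx = group G for G (structure) +
  fixes N and S
  assumes nN: "N \<lhd> G" and finS: "finite S" and Ssub: "S \<subseteq> carrier G"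
begin

sublocale Q: comm_group "QQ G N" by (rule QQ_comm_group[OF nN])

abbreviation "XX h \<equiv> Wc G N #> psi G N h"

lemma X_carrier: "h \<in> carrier G \<Longrightarrow> XX h \<in> carrier (QQ G N)"
  unfolding QQ_def using psi_N[OF nN] by auto

lemma XS: "h \<in> S \<Longrightarrow> XX h \<in> carrier (QQ G N)"
  using X_carrier Ssub by auto

lemma PHI_closed: "PHI G N S f \<in> carrier (QQ G N)"
  unfolding PHI_def by (rule Q.finprod_closed) (auto intro: XS)

lemma PHI_add: "PHI G N S (\<lambda>h. f h + g h) = PHI G N S f \<otimes>\<^bsub>QQ G N\<^esub> PHI G N S g"
proof -
  have "PHI G N S (\<lambda>h. f h + g h) = finprod (QQ G N) (\<lambda>h. XX h [^]\<^bsub>QQ G N\<^esub> f h \<otimes>\<^bsub>QQ G N\<^esub> XX h [^]\<^bsub>QQ G N\<^esub> g h) S"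
    unfolding PHI_def
    apply (rule Q.finprod_cong'[OF refl])
     apply (rule Pi_I)
     apply (intro Q.m_closed Q.int_pow_closed XS; assumption)
    apply (rule Q.int_pow_mult[OF XS])
    apply assumption
    done
  also have "\<dots> = PHI G N S f \<otimes>\<^bsub>QQ G N\<^esub> PHI G N S g"
    unfolding PHI_def by (rule Q.finprod_multf) (auto intro: XS)
  finally show ?thesis .
qed

lemma PHI_zero: "PHI G N S (\<lambda>h. 0) = \<one>\<^bsub>QQ G N\<^esub>"
  unfolding PHI_def by simp

lemma PHI_neg: "PHI G N S (\<lambda>h. - f h) = inv\<^bsub>QQ G N\<^esub> PHI G N S f"
proof -
  have "PHI G N S (\<lambda>h. - f h) \<otimes>\<^bsub>QQ G N\<^esub> PHI G N S f = \<one>\<^bsub>QQ G N\<^esub>"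
    using PHI_add[of "\<lambda>h. - f h" f] PHI_zero by simp
  then show ?thesis using PHI_closed by (intro Q.inv_equality[symmetric]) auto
qed

lemma PHI_sum: "finite P \<Longrightarrow> PHI G N S (\<lambda>h. \<Sum>p\<in>P. F p h) = finprod (QQ G N) (\<lambda>p. PHI G N S (F p)) P"
proof (induction P rule: finite_induct)
  case empty then show ?case using PHI_zero by simp
next
  case (insert a P)
  have "PHI G N S (\<lambda>h. \<Sum>p\<in>insert a P. F p h) = PHI G N S (\<lambda>h. F a h + (\<Sum>p\<in>P. F p h))"
    using insert by simp
  also have "\<dots> = PHI G N S (F a) \<otimes>\<^bsub>QQ G N\<^esub> PHI G N S (\<lambda>h. \<Sum>p\<in>P. F p h)" by (rule PHI_add)
  also have "\<dots> = finprod (QQ G N) (\<lambda>p. PHI G N S (F p)) (insert a P)"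
    using insert PHI_closed by simp
  finally show ?case .
qed

lemma PHI_single: "c \<in> S \<Longrightarrow> PHI G N S (\<lambda>h. k * of_bool (h = c)) = XX c [^]\<^bsub>QQ G N\<^esub> k"
proof -
  assume c: "c \<in> S"
  have "PHI G N S (\<lambda>h. k * of_bool (h = c)) = finprod (QQ G N) (\<lambda>h. if c = h then XX h [^]\<^bsub>QQ G N\<^esub> k else \<one>\<^bsub>QQ G N\<^esub>) S"
    unfolding PHI_def by (rule Q.finprod_cong') (auto intro!: Q.int_pow_closed XS)
  also have "\<dots> = XX c [^]\<^bsub>QQ G N\<^esub> k"
    by (rule Q.finprod_singleton[OF c finS]) (auto intro!: Q.int_pow_closed XS)
  finally show ?thesis .
qed

lemma X_mult:
  assumes a: "a \<in> carrier G" and b: "b \<in> carrier G" and or: "a \<in> N \<or> b \<in> N"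
  shows "XX (a \<otimes> b) = XX a \<otimes>\<^bsub>QQ G N\<^esub> XX b"
proof -
  interpret W: normal "Wc G N" G by (rule Wc_normal[OF nN])
  have "XX (a \<otimes> b) = Wc G N #> (psi G N a \<otimes> psi G N b)" by (rule psi_cocycle[OF nN a b or])
  also have "\<dots> = XX a <#> XX b"
    using psi_N[OF nN a] psi_N[OF nN b] nN by (intro W.rcos_sum[symmetric]) (auto dest: normal_imp_subgroup subgroup.mem_carrier)
  finally show ?thesis unfolding QQ_def by simp
qed

lemma PHI_EE:
  assumes a: "a \<in> carrier G" and b: "b \<in> carrier G" and or: "a \<in> N \<or> b \<in> N"
    and S: "a \<in> S" "b \<in> S" "a \<otimes> b \<in> S"
  shows "PHI G N S (\<lambda>h. k * (of_bool (h = b) - of_bool (h = a \<otimes> b) + of_bool (h = a))) = \<one>\<^bsub>QQ G N\<^esub>"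
proof -
  have "PHI G N S (\<lambda>h. k * (of_bool (h = b) - of_bool (h = a \<otimes> b) + of_bool (h = a)))
      = PHI G N S (\<lambda>h. (k * of_bool (h = b) + (-k) * of_bool (h = a \<otimes> b)) + k * of_bool (h = a))"
    by (simp add: algebra_simps)
  also have "\<dots> = (PHI G N S (\<lambda>h. k * of_bool (h = b)) \<otimes>\<^bsub>QQ G N\<^esub> PHI G N S (\<lambda>h. (-k) * of_bool (h = a \<otimes> b))) \<otimes>\<^bsub>QQ G N\<^esub> PHI G N S (\<lambda>h. k * of_bool (h = a))"
    by (simp only: PHI_add)
  also have "\<dots> = (XX b [^]\<^bsub>QQ G N\<^esub> k \<otimes>\<^bsub>QQ G N\<^esub> XX (a \<otimes> b) [^]\<^bsub>QQ G N\<^esub> (-k)) \<otimes>\<^bsub>QQ G N\<^esub> XX a [^]\<^bsub>QQ G N\<^esub> k"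
    using S by (simp only: PHI_single)
  also have "\<dots> = \<one>\<^bsub>QQ G N\<^esub>"
  proof -
    have xa: "XX a \<in> carrier (QQ G N)" and xb: "XX b \<in> carrier (QQ G N)" using a b X_carrier by auto
    have "XX (a \<otimes> b) [^]\<^bsub>QQ G N\<^esub> (-k) = inv\<^bsub>QQ G N\<^esub> (XX a [^]\<^bsub>QQ G N\<^esub> k \<otimes>\<^bsub>QQ G N\<^esub> XX b [^]\<^bsub>QQ G N\<^esub> k)"
      unfolding X_mult[OF a b or] using xa xb by (simp add: Q.int_pow_neg Q.int_pow_distrib)
    also have "\<dots> = inv\<^bsub>QQ G N\<^esub> (XX a [^]\<^bsub>QQ G N\<^esub> k) \<otimes>\<^bsub>QQ G N\<^esub> inv\<^bsub>QQ G N\<^esub> (XX b [^]\<^bsub>QQ G N\<^esub> k)"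
      using xa xb by (simp add: Q.inv_mult)
    finally have e: "XX (a \<otimes> b) [^]\<^bsub>QQ G N\<^esub> (-k) = \<dots>" .
    define u where "u = XX b [^]\<^bsub>QQ G N\<^esub> k"
    define v where "v = XX a [^]\<^bsub>QQ G N\<^esub> k"
    have uc: "u \<in> carrier (QQ G N)" and vc: "v \<in> carrier (QQ G N)" unfolding u_def v_def using xa xb by auto
    have "u \<otimes>\<^bsub>QQ G N\<^esub> (inv\<^bsub>QQ G N\<^esub> v \<otimes>\<^bsub>QQ G N\<^esub> inv\<^bsub>QQ G N\<^esub> u) = inv\<^bsub>QQ G N\<^esub> v \<otimes>\<^bsub>QQ G N\<^esub> (u \<otimes>\<^bsub>QQ G N\<^esub> inv\<^bsub>QQ G N\<^esub> u)"
      using uc vc by (intro Q.m_lcomm) auto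
    also have "\<dots> = inv\<^bsub>QQ G N\<^esub> v" using uc vc by simp
    finally have f: "u \<otimes>\<^bsub>QQ G N\<^esub> (inv\<^bsub>QQ G N\<^esub> v \<otimes>\<^bsub>QQ G N\<^esub> inv\<^bsub>QQ G N\<^esub> u) = inv\<^bsub>QQ G N\<^esub> v" .
    show ?thesis unfolding e u_def[symmetric] v_def[symmetric] f using vc by simp
  qed
  finally show ?thesis .
qed

end



definition lprod :: "'c monoid \<Rightarrow> 'c list \<Rightarrow> 'c" where
  "lprod Q l = foldr (\<lambda>a b. a \<otimes>\<^bsub>Q\<^esub> b) l \<one>\<^bsub>Q\<^esub>"

context phictx begin

lemma PHI_bd:
  assumes c: "c \<in> C2' G N"
    and S1: "fst ` supp2 c \<subseteq> S" and S2: "snd ` supp2 c \<subseteq> S"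
    and S3: "(\<lambda>p. fst p \<otimes> snd p) ` supp2 c \<subseteq> S"
  shows "PHI G N S (bd G c) = \<one>\<^bsub>QQ G N\<^esub>"
proof -
  have fin: "finite (supp2 c)" using c unfolding C2'_def by auto
  have "PHI G N S (bd G c) = finprod (QQ G N) (\<lambda>p. PHI G N S (\<lambda>h. c p * (of_bool (h = snd p) - of_bool (h = fst p \<otimes> snd p) + of_bool (h = fst p)))) (supp2 c)"
    unfolding bd_def by (rule PHI_sum[OF fin])
  also have "\<dots> = \<one>\<^bsub>QQ G N\<^esub>"
  proof (rule Q.finprod_one_eqI)
    fix p assume p: "p \<in> supp2 c"
    then have "fst p \<in> carrier G" "snd p \<in> carrier G" "fst p \<in> N \<or> snd p \<in> N"
      using c unfolding C2'_def by auto
    moreover have "fst p \<in> S" "snd p \<in> S" "fst p \<otimes> snd p \<in> S" using p S1 S2 S3 by auto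
    ultimately show "PHI G N S (\<lambda>h. c p * (of_bool (h = snd p) - of_bool (h = fst p \<otimes> snd p) + of_bool (h = fst p))) = \<one>\<^bsub>QQ G N\<^esub>"
      by (rule PHI_EE)
  qed
  finally show ?thesis .
qed

lemma PHI_count:
  "set xs \<subseteq> S \<Longrightarrow> set xs \<subseteq> N \<Longrightarrow> PHI G N S (\<lambda>h. int (count_list xs h)) = lprod (QQ G N) (map (\<lambda>x. Wc G N #> x) xs)"
proof (induction xs)
  case Nil then show ?case using PHI_zero by (simp add: lprod_def)
next
  case (Cons x xs)
  have "PHI G N S (\<lambda>h. int (count_list (x # xs) h)) = PHI G N S (\<lambda>h. 1 * of_bool (h = x) + int (count_list xs h))"
    by (rule arg_cong[where f="PHI G N S"]) (auto simp: fun_eq_iff)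
  also have "\<dots> = PHI G N S (\<lambda>h. 1 * of_bool (h = x)) \<otimes>\<^bsub>QQ G N\<^esub> PHI G N S (\<lambda>h. int (count_list xs h))"
    by (rule PHI_add)
  also have "\<dots> = (Wc G N #> x) \<otimes>\<^bsub>QQ G N\<^esub> lprod (QQ G N) (map (\<lambda>x. Wc G N #> x) xs)"
    using Cons PHI_single[of x 1] XS[of x] psi_id[OF nN, of x] by simp
  finally show ?case by (simp add: lprod_def)
qed

end

lemma partA_prod:
  assumes grp: "group G" and nN: "N \<lhd> G" and xs: "set xs \<subseteq> N" and ys: "set ys \<subseteq> N"
    and B: "(chain_of xs - chain_of ys :: 'a \<Rightarrow> int) \<in> B1' G N"
  shows "lprod (QQ G N) (map (\<lambda>x. Wc G N #>\<^bsub>G\<^esub> x) xs) \<otimes>\<^bsub>QQ G N\<^esub> inv\<^bsub>QQ G N\<^esub> lprod (QQ G N) (map (\<lambda>x. Wc G N #>\<^bsub>G\<^esub> x) ys) = \<one>\<^bsub>QQ G N\<^esub>"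
proof -
  obtain c :: "'a \<times> 'a \<Rightarrow> int" where c: "c \<in> C2' G N" and bc: "bd G c = chain_of xs - chain_of ys"
    using B unfolding B1'_def by auto
  define S where "S = fst ` supp2 c \<union> snd ` supp2 c \<union> (\<lambda>p. fst p \<otimes>\<^bsub>G\<^esub> snd p) ` supp2 c \<union> set xs \<union> set ys"
  have fin: "finite (supp2 c)" using c unfolding C2'_def by auto
  have Nc: "N \<subseteq> carrier G" using nN by (simp add: normal_imp_subgroup subgroup.subset)
  have "S \<subseteq> carrier G" unfolding S_def using c xs ys Nc unfolding C2'_def
    by (auto intro: group.is_monoid[OF grp] monoid.m_closed)
  then interpret phictx G N S
    using grp nN fin unfolding S_def by (intro phictx.intro phictx_axioms.intro) auto
  have e1: "PHI G N S (bd G c) = \<one>\<^bsub>QQ G N\<^esub>" by (rule PHI_bd[OF c]) (auto simp: S_def)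
  have bdeq: "bd G c = (\<lambda>h. int (count_list xs h) + - int (count_list ys h))"
    unfolding bc by (simp add: chain_of_def fun_eq_iff)
  have e0: "PHI G N S (\<lambda>h. int (count_list xs h) + - int (count_list ys h)) = \<one>\<^bsub>QQ G N\<^esub>"
    using e1 unfolding bdeq .
  have e: "PHI G N S (\<lambda>h. int (count_list xs h)) \<otimes>\<^bsub>QQ G N\<^esub> PHI G N S (\<lambda>h. - int (count_list ys h)) = \<one>\<^bsub>QQ G N\<^esub>"
    using e0 unfolding PHI_add .
  have Sx: "set xs \<subseteq> S" and Sy: "set ys \<subseteq> S" unfolding S_def by blast+
  from e show ?thesis unfolding PHI_neg PHI_count[OF Sx xs] PHI_count[OF Sy ys] .
qed




context group begin

lemma cls_mult: "N \<lhd> G \<Longrightarrow> a \<in> carrier G \<Longrightarrow> b \<in> carrier G \<Longrightarrow>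
  Wc G N #> (a \<otimes> b) = (Wc G N #> a) \<otimes>\<^bsub>QQ G N\<^esub> (Wc G N #> b)"
proof -
  assume nN: "N \<lhd> G" and a: "a \<in> carrier G" and b: "b \<in> carrier G"
  interpret W: normal "Wc G N" G by (rule Wc_normal[OF nN])
  show ?thesis unfolding QQ_def using W.rcos_sum[OF a b] by simp
qed

lemma cls_one: "N \<lhd> G \<Longrightarrow> Wc G N #> \<one> = \<one>\<^bsub>QQ G N\<^esub>"
  unfolding QQ_def using Wc_carrier by (simp add: coset_mult_one)

lemma cls_carrier: "a \<in> N \<Longrightarrow> Wc G N #> a \<in> carrier (QQ G N)"
  unfolding QQ_def by auto

lemma foldr_conj:
  assumes nN: "N \<lhd> G"
  shows "set L \<subseteq> N \<Longrightarrow> set gs \<subseteq> carrier G \<Longrightarrow> length gs = length L \<Longrightarrow>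
    foldr (\<lambda>(g, y) acc. g \<otimes> y \<otimes> inv g \<otimes> acc) (zip gs L) \<one> \<in> carrier G \<and>
    Wc G N #> foldr (\<lambda>(g, y) acc. g \<otimes> y \<otimes> inv g \<otimes> acc) (zip gs L) \<one> = lprod (QQ G N) (map (\<lambda>x. Wc G N #> x) L)"
proof (induction L arbitrary: gs)
  case Nil then show ?case using cls_one[OF nN] by (simp add: lprod_def)
next
  case (Cons y L)
  interpret N: normal N G by (rule nN)
  obtain g gs' where gs: "gs = g # gs'" using Cons.prems by (cases gs) auto
  have g: "g \<in> carrier G" and y: "y \<in> N" using Cons.prems gs by auto
  have yc: "y \<in> carrier G" using y by auto
  let ?r = "foldr (\<lambda>(g, y) acc. g \<otimes> y \<otimes> inv g \<otimes> acc) (zip gs' L) \<one>"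
  have IH: "?r \<in> carrier G" "Wc G N #> ?r = lprod (QQ G N) (map (\<lambda>x. Wc G N #> x) L)"
    using Cons gs by auto
  have "Wc G N #> (g \<otimes> y \<otimes> inv g \<otimes> ?r) = (Wc G N #> (g \<otimes> y \<otimes> inv g)) \<otimes>\<^bsub>QQ G N\<^esub> (Wc G N #> ?r)"
    using g yc IH by (intro cls_mult[OF nN]) auto
  also have "\<dots> = (Wc G N #> y) \<otimes>\<^bsub>QQ G N\<^esub> lprod (QQ G N) (map (\<lambda>x. Wc G N #> x) L)"
    using conj_class[OF nN g y] IH by simp
  finally show ?case using gs g yc IH by (simp add: lprod_def)
qed

lemma lprod_carrier: "N \<lhd> G \<Longrightarrow> set L \<subseteq> N \<Longrightarrow> lprod (QQ G N) (map (\<lambda>x. Wc G N #> x) L) \<in> carrier (QQ G N)"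
proof (induction L)
  case Nil
  interpret Q: comm_group "QQ G N" by (rule QQ_comm_group[OF Nil(1)])
  show ?case by (simp add: lprod_def)
next
  case (Cons a L)
  interpret Q: comm_group "QQ G N" by (rule QQ_comm_group[OF Cons(2)])
  show ?case using Cons cls_carrier[of a N] by (simp add: lprod_def)
qed

lemma lprod_append: "N \<lhd> G \<Longrightarrow> set L1 \<subseteq> N \<Longrightarrow> set L2 \<subseteq> N \<Longrightarrow>
  lprod (QQ G N) (map (\<lambda>x. Wc G N #> x) (L1 @ L2)) = lprod (QQ G N) (map (\<lambda>x. Wc G N #> x) L1) \<otimes>\<^bsub>QQ G N\<^esub> lprod (QQ G N) (map (\<lambda>x. Wc G N #> x) L2)"
proof (induction L1)
  case Nil
  interpret Q: comm_group "QQ G N" by (rule QQ_comm_group[OF Nil(1)])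
  show ?case using lprod_carrier[OF Nil(1) Nil(3)] by (simp add: lprod_def)
next
  case (Cons a L)
  interpret Q: comm_group "QQ G N" by (rule QQ_comm_group[OF Cons(2)])
  show ?case using Cons cls_carrier[of a N] lprod_carrier[OF Cons(2), of L] lprod_carrier[OF Cons(2), of L2]
    by (simp add: lprod_def Q.m_assoc)
qed

lemma lprod_inv: "N \<lhd> G \<Longrightarrow> set L \<subseteq> N \<Longrightarrow>
  lprod (QQ G N) (map (\<lambda>x. Wc G N #> x) (map (\<lambda>y. inv y) L)) = inv\<^bsub>QQ G N\<^esub> lprod (QQ G N) (map (\<lambda>x. Wc G N #> x) L)"
proof (induction L)
  case Nil
  interpret Q: comm_group "QQ G N" by (rule QQ_comm_group[OF Nil(1)])
  show ?case by (simp add: lprod_def)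
next
  case (Cons a L)
  interpret Q: comm_group "QQ G N" by (rule QQ_comm_group[OF Cons(2)])
  interpret N: normal N G by (rule Cons(2))
  have a: "a \<in> N" "a \<in> carrier G" "inv a \<in> N" using Cons by auto
  have ia: "Wc G N #> inv a = inv\<^bsub>QQ G N\<^esub> (Wc G N #> a)"
  proof (rule Q.inv_equality[symmetric])
    show "(Wc G N #> inv a) \<otimes>\<^bsub>QQ G N\<^esub> (Wc G N #> a) = \<one>\<^bsub>QQ G N\<^esub>"
      using cls_mult[OF Cons(2), of "inv a" a] cls_one[OF Cons(2)] a by simp
  qed (use a cls_carrier in auto)
  have "lprod (QQ G N) (map (\<lambda>x. Wc G N #> x) (map (\<lambda>y. inv y) (a # L))) = inv\<^bsub>QQ G N\<^esub> (Wc G N #> a) \<otimes>\<^bsub>QQ G N\<^esub> inv\<^bsub>QQ G N\<^esub> lprod (QQ G N) (map (\<lambda>x. Wc G N #> x) L)"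
    using Cons ia by (simp add: lprod_def)
  also have "\<dots> = inv\<^bsub>QQ G N\<^esub> ((Wc G N #> a) \<otimes>\<^bsub>QQ G N\<^esub> lprod (QQ G N) (map (\<lambda>x. Wc G N #> x) L))"
    using a cls_carrier lprod_carrier[OF Cons(2), of L] Cons by (simp add: Q.inv_mult)
  finally show ?case by (simp add: lprod_def)
qed

lemma conj_prod_Wc:
  assumes nN: "N \<lhd> G" and xs: "set xs \<subseteq> N" and ys: "set ys \<subseteq> N"
    and ne: "xs @ map (\<lambda>y. inv y) ys \<noteq> []"
    and gs: "set gs \<subseteq> carrier G" "length gs = length (xs @ map (\<lambda>y. inv y) ys) - 1"
    and B: "(chain_of xs - chain_of ys :: 'a \<Rightarrow> int) \<in> B1' G N"
  shows "conj_prod G (xs @ map (\<lambda>y. inv y) ys) gs \<in> Wc G N"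
proof -
  interpret N: normal N G by (rule nN)
  interpret Q: comm_group "QQ G N" by (rule QQ_comm_group[OF nN])
  let ?L = "xs @ map (\<lambda>y. inv y) ys"
  have LN: "set ?L \<subseteq> N" using xs ys by auto
  obtain z L' where L: "?L = z # L'" using ne by (cases ?L) auto
  have z: "z \<in> N" "z \<in> carrier G" and L'N: "set L' \<subseteq> N" using LN L by auto
  have fc: "foldr (\<lambda>(g, y) acc. g \<otimes> y \<otimes> inv g \<otimes> acc) (zip gs L') \<one> \<in> carrier G \<and>
    Wc G N #> foldr (\<lambda>(g, y) acc. g \<otimes> y \<otimes> inv g \<otimes> acc) (zip gs L') \<one> = lprod (QQ G N) (map (\<lambda>x. Wc G N #> x) L')"
    by (rule foldr_conj[OF nN L'N gs(1)]) (use gs(2) L in simp)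
  have cp: "conj_prod G ?L gs \<in> carrier G" unfolding conj_prod_def L using z fc by simp
  have "Wc G N #> conj_prod G ?L gs = lprod (QQ G N) (map (\<lambda>x. Wc G N #> x) ?L)"
    unfolding conj_prod_def L using z fc cls_mult[OF nN] by (simp add: lprod_def)
  also have "\<dots> = lprod (QQ G N) (map (\<lambda>x. Wc G N #> x) xs) \<otimes>\<^bsub>QQ G N\<^esub> inv\<^bsub>QQ G N\<^esub> lprod (QQ G N) (map (\<lambda>x. Wc G N #> x) ys)"
    using lprod_append[OF nN xs, of "map (\<lambda>y. inv y) ys"] lprod_inv[OF nN ys] ys by auto
  also have "\<dots> = \<one>\<^bsub>QQ G N\<^esub>" by (rule partA_prod[OF is_group nN xs ys B])
  finally have "Wc G N #> conj_prod G ?L gs = Wc G N" by (simp add: QQ_def)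
  then show ?thesis using coset_join1[OF _ cp Wc_subgroup[OF nN]] by simp
qed

end



context group begin

lemma foldr_tval: "length gs = length T \<Longrightarrow>
  foldr (\<lambda>(g, y) acc. g \<otimes> y \<otimes> inv g \<otimes> acc) (zip gs (map (tval G) T)) \<one> = FF G (zip gs T)"
proof (induction T arbitrary: gs)
  case Nil then show ?case by (simp add: FF_def)
next
  case (Cons t T)
  then obtain g gs' where "gs = g # gs'" by (cases gs) auto
  then show ?case using Cons by (simp add: FF_def)
qed

lemma sum_zip: "length gs = length T \<Longrightarrow> (\<Sum>(g,t)\<leftarrow>zip gs T. f t) = (\<Sum>t\<leftarrow>T. f t)"
proof (induction T arbitrary: gs)
  case Nil then show ?case by simp
next
  case (Cons t T)
  then obtain g gs' where "gs = g # gs'" by (cases gs) auto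
  then show ?case using Cons by simp
qed

lemma chain_main:
  assumes nN: "N \<lhd> G" and ne: "T \<noteq> []" and TN: "fst ` set T \<subseteq> N"
    and gs: "set gs \<subseteq> carrier G" "length gs = length T - 1"
    and ws: "set ws \<subseteq> carrier G \<times> N"
    and eq: "conj_prod G (map (tval G) T) gs = CP G ws"
  shows "\<exists>L. length L + 2 \<le> 3 * length T + 4 * length ws \<and> valid G N L \<and> (\<forall>h. BL G L h = (\<Sum>t\<leftarrow>T. con t h))"
proof -
  interpret N: normal N G by (rule nN)
  obtain t1 T' where T: "T = t1 # T'" using ne by (cases T) auto
  have lgs: "length gs = length T'" using gs T by simp
  have t1N: "fst t1 \<in> N" using TN T by auto
  have v: "tval G t1 \<in> N" by (rule tval_closed[OF nN t1N])
  have cp: "conj_prod G (map (tval G) T) gs = tval G t1 \<otimes> FF G (zip gs T')"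
    unfolding conj_prod_def T using foldr_tval[OF lgs] by simp
  obtain L0 where L0: "length L0 = 1" "valid G N L0" "\<forall>h. BL G L0 h = dl (tval G t1) h - dl \<one> h - con t1 h"
    using step_first[OF nN t1N] by auto
  have z1: "fst ` set (zip gs T') \<subseteq> carrier G" using gs by (auto dest: set_zip_leftD)
  have z2: "(fst \<circ> snd) ` set (zip gs T') \<subseteq> N" using TN T by (fastforce dest: set_zip_rightD)
  obtain L1 where L1: "length L1 \<le> 3 * length (zip gs T')" "valid G N L1"
    "\<forall>h. BL G L1 h = dl (tval G t1 \<otimes> FF G (zip gs T')) h - dl (tval G t1) h - (\<Sum>(g,t)\<leftarrow>zip gs T'. con t h)"
    using chain_FF[OF nN z1 z2 v] by auto
  obtain L2 where L2: "length L2 \<le> 4 * length ws" "valid G N L2"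
    "\<forall>h. BL G L2 h = dl (\<one> \<otimes> CP G ws) h - dl \<one> h"
    using chain_CP[OF nN ws N.one_closed] by auto
  have CPc: "CP G ws \<in> carrier G" by (rule CP_closed[OF nN ws])
  let ?L = "negL (L0 @ L1) @ L2"
  have "BL G ?L h = (\<Sum>t\<leftarrow>T. con t h)" for h
    using L0(3) L1(3) L2(3) eq cp CPc sum_zip[OF lgs, of "\<lambda>t. con t h"] T
    by (simp add: BL_append BL_negL)
  moreover have "valid G N ?L" using L0 L1 L2 by (simp add: valid_append valid_negL)
  moreover have "length ?L + 2 \<le> 3 * length T + 4 * length ws" using L0 L1 L2 lgs T by simp
  ultimately show ?thesis by blast
qed

end

lemma sum_list_neg_aux: "(\<Sum>y\<leftarrow>ys. - (f y :: real)) = - (\<Sum>y\<leftarrow>ys. f y)"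
  by (induction ys) auto

lemma count_dl: "real (count_list xs h) = (\<Sum>x\<leftarrow>xs. dl x h)"
  by (induction xs) (auto simp: dl_def)

theorem proposition5p20:
  fixes G :: "('a, 'b) monoid_scheme" and N :: "'a set" and xs ys :: "'a list"
  assumes "group G" and "N \<lhd> G"
    and "set xs \<subseteq> N" and "set ys \<subseteq> N"
    and "length xs + length ys \<ge> 1"
    and "(chain_of xs - chain_of ys :: 'a \<Rightarrow> int) \<in> B1' G N"
  shows "norm' G N (\<lambda>h. real_of_int ((chain_of xs - chain_of ys) h))
         \<le> 4 * real (cl_sum G N (xs @ map (\<lambda>y. inv\<^bsub>G\<^esub> y) ys)) - 1 + 3 * real (length xs + length ys)"
proof -
  interpret group G by (rule assms(1))
  have nN: "N \<lhd> G" by (rule assms(2))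
  interpret N: normal N G by (rule nN)
  let ?L = "xs @ map (\<lambda>y. inv\<^bsub>G\<^esub> y) ys"
  let ?A = "{cl G N (conj_prod G ?L gs) | gs. length gs = length ?L - 1 \<and> set gs \<subseteq> carrier G}"
  have "cl G N (conj_prod G ?L (replicate (length ?L - 1) \<one>\<^bsub>G\<^esub>)) \<in> ?A" by auto
  then have "?A \<noteq> {}" by blast
  then have "Inf ?A \<in> ?A" by (rule Inf_nat_def1)
  then obtain gs where gs: "length gs = length ?L - 1" "set gs \<subseteq> carrier G"
    and clgs: "cl_sum G N ?L = cl G N (conj_prod G ?L gs)"
    unfolding cl_sum_def by auto
  have ne: "?L \<noteq> []" using assms(5) by auto
  have "conj_prod G ?L gs \<in> Wc G N"
    by (rule conj_prod_Wc[OF nN assms(3,4) ne gs(2,1) assms(6)])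
  then have ex: "\<exists>ws. length ws = length ws \<and> set ws \<subseteq> carrier G \<times> N \<and>
      conj_prod G ?L gs = foldr (\<lambda>(g, x) acc. commut G g x \<otimes>\<^bsub>G\<^esub> acc) ws \<one>\<^bsub>G\<^esub>"
    unfolding Wc_def CP_def by blast
  then have "\<exists>n ws. length ws = n \<and> set ws \<subseteq> carrier G \<times> N \<and>
      conj_prod G ?L gs = foldr (\<lambda>(g, x) acc. commut G g x \<otimes>\<^bsub>G\<^esub> acc) ws \<one>\<^bsub>G\<^esub>" by blast
  then have "\<exists>ws. length ws = cl G N (conj_prod G ?L gs) \<and> set ws \<subseteq> carrier G \<times> N \<and>
      conj_prod G ?L gs = foldr (\<lambda>(g, x) acc. commut G g x \<otimes>\<^bsub>G\<^esub> acc) ws \<one>\<^bsub>G\<^esub>"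
    unfolding cl_def by (rule LeastI_ex)
  then obtain ws where ws: "length ws = cl_sum G N ?L" "set ws \<subseteq> carrier G \<times> N"
      "conj_prod G ?L gs = CP G ws"
    unfolding CP_def clgs by blast
  define T where "T = map (\<lambda>x. (x, True)) xs @ map (\<lambda>y. (y, False)) ys"
  have mT: "map (tval G) T = ?L" unfolding T_def by (simp add: tval_def o_def)
  have lT: "length T = length xs + length ys" unfolding T_def by simp
  obtain Lc where Lc: "length Lc + 2 \<le> 3 * length T + 4 * length ws" "valid G N Lc"
      "\<forall>h. BL G Lc h = (\<Sum>t\<leftarrow>T. con t h)"
  proof -
    have "T \<noteq> []" using assms(5) lT by auto
    moreover have "fst ` set T \<subseteq> N" using assms(3,4) unfolding T_def by auto
    moreover have "length gs = length T - 1" using gs(1) lT by simp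
    moreover have "conj_prod G (map (tval G) T) gs = CP G ws" using mT ws(3) by simp
    ultimately show ?thesis using chain_main[OF nN, of T gs ws] gs(2) ws(2) that by blast
  qed
  have "bd G (mk Lc) = (\<lambda>h. real_of_int ((chain_of xs - chain_of ys) h))"
  proof
    fix h
    have "(\<Sum>t\<leftarrow>T. con t h) = (\<Sum>x\<leftarrow>xs. dl x h) - (\<Sum>y\<leftarrow>ys. dl y h)"
      unfolding T_def by (simp add: con_def sum_list_neg_aux o_def)
    then show "bd G (mk Lc) h = real_of_int ((chain_of xs - chain_of ys) h)"
      using Lc(3) bd_mk[of G Lc] by (simp add: chain_of_def count_dl[symmetric])
  qed
  then have "norm' G N (\<lambda>h. real_of_int ((chain_of xs - chain_of ys) h)) \<le> real (length Lc)"
    by (rule norm'_le[OF Lc(2)])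
  also have "\<dots> \<le> 4 * real (cl_sum G N ?L) - 1 + 3 * real (length xs + length ys)"
  proof -
    have "real (length Lc + 2) \<le> real (3 * length T + 4 * length ws)" using Lc(1) by (rule of_nat_mono)
    then have "real (length Lc) + 2 \<le> 3 * real (length T) + 4 * real (length ws)" by simp
    then show ?thesis using ws(1) lT by simp
  qed
  finally show ?thesis .
qed



end
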